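(* Let $(p_n)_{n\ge1}$ be a strictly increasing sequence of odd primes and let $G=\big\langle \frac{1}{2^np_n} : n\in\mathbb N\big\rangle$ be the additive submonoid of $\mathbb Q_{\ge0}$ they generate. Then $\mathcal A(G)=\{\frac1{2^np_n}: n\in\mathbb N\}$, and $G$ is neither a BFM nor an IDF monoid.
   Context: Monoids are commutative, cancellative, with identity, written additively. $\mathcal A(G)$ is the set of atoms (nonunits not expressible as a sum of two nonunits). $G$ is a BFM if every element is a finite sum of atoms and has only finitely many factorization lengths; $G$ is IDF if every element is divisible (in $G$) by only finitely many atoms. *)

theory Defs
  imports Complex_Main "HOL-Computational_Algebra.Primes"
begin

inductive_set gen_monoid :: "rat set \<Rightarrow> rat set" for S :: "rat set" where
  zero: "0 \<in> gen_monoid S"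
| gen: "s \<in> S \<Longrightarrow> s \<in> gen_monoid S"
| add: "x \<in> gen_monoid S \<Longrightarrow> y \<in> gen_monoid S \<Longrightarrow> x + y \<in> gen_monoid S"

definition munits :: "rat set \<Rightarrow> rat set" where
  "munits M = {u \<in> M. \<exists>v \<in> M. u + v = 0}"

definition atoms :: "rat set \<Rightarrow> rat set" where
  "atoms M = {a \<in> M. a \<notin> munits M \<and>
     (\<forall>b \<in> M. \<forall>c \<in> M. a = b + c \<longrightarrow> b \<in> munits M \<or> c \<in> munits M)}"

definition mdvd :: "rat set \<Rightarrow> rat \<Rightarrow> rat \<Rightarrow> bool" where
  "mdvd M a x \<longleftrightarrow> (\<exists>c \<in> M. x = a + c)"

definition lengths :: "rat set \<Rightarrow> rat \<Rightarrow> nat set" where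
  "lengths M x = {length xs | xs. set xs \<subseteq> atoms M \<and> sum_list xs = x}"

definition is_BFM :: "rat set \<Rightarrow> bool" where
  "is_BFM M \<longleftrightarrow> (\<forall>x \<in> M. x \<notin> munits M \<longrightarrow> lengths M x \<noteq> {} \<and> finite (lengths M x))"

definition is_IDF :: "rat set \<Rightarrow> bool" where
  "is_IDF M \<longleftrightarrow> (\<forall>x \<in> M. finite {a \<in> atoms M. mdvd M a x})"

end

theory Submission
  imports Defs
begin

definition aa :: "(nat \<Rightarrow> nat) \<Rightarrow> nat \<Rightarrow> rat" where
  "aa p n = 1 / (2 ^ n * of_nat (p n))"

lemma G_sub:
  assumes "x \<in> gen_monoid {aa p n | n. n \<ge> 1}"
  shows "\<exists>xs. set xs \<subseteq> {1..} \<and> x = sum_list (map (aa p) xs)"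
  using assms
proof (induction rule: gen_monoid.induct)
  case zero
  then show ?case by (intro exI[of _ "[]"]) auto
next
  case (gen s)
  then obtain n where "n \<ge> 1" "s = aa p n" by auto
  then show ?case by (intro exI[of _ "[n]"]) auto
next
  case (add x y)
  then obtain xs ys where "set xs \<subseteq> {1..}" "x = sum_list (map (aa p) xs)"
    "set ys \<subseteq> {1..}" "y = sum_list (map (aa p) ys)" by blast
  then show ?case by (intro exI[of _ "xs @ ys"]) auto
qed

lemma G_sup:
  assumes "set xs \<subseteq> {1..}"
  shows "sum_list (map (aa p) xs) \<in> gen_monoid {aa p n | n. n \<ge> 1}"
  using assms
proof (induction xs)
  case Nil
  then show ?case by (simp add: gen_monoid.zero)
next
  case (Cons a xs)
  then have "aa p a \<in> gen_monoid {aa p n | n. n \<ge> 1}"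
    by (intro gen_monoid.gen) auto
  with Cons show ?case by (auto intro: gen_monoid.add)
qed

context
  fixes p :: "nat \<Rightarrow> nat"
  assumes mono: "strict_mono_on {1..} p"
    and pr: "\<And>n. n \<ge> 1 \<Longrightarrow> prime (p n) \<and> odd (p n)"
begin

lemma aa_pos:
  assumes "n \<ge> 1"
  shows "aa p n > 0"
proof -
  have "p n > 0" using assms pr prime_gt_0_nat by blast
  then show ?thesis unfolding aa_def by simp
qed

lemma sum_nonneg:
  assumes "set xs \<subseteq> {1..}"
  shows "sum_list (map (aa p) xs) \<ge> 0"
  using assms(1)
proof (induction xs)
  case Nil then show ?case by simp
next
  case (Cons a xs)
  then show ?case using aa_pos[of a] by auto
qed

lemma sum_pos:
  assumes "set xs \<subseteq> {1..}" "xs \<noteq> []"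
  shows "sum_list (map (aa p) xs) > 0"
proof -
  obtain y ys where "xs = y # ys" using assms(2) by (cases xs) auto
  then show ?thesis using assms aa_pos[of y] sum_nonneg[of ys]
    by auto
qed

lemma G_nonneg:
  assumes "x \<in> gen_monoid {aa p n | n. n \<ge> 1}"
  shows "x \<ge> 0"
  using G_sub[OF assms(1)] sum_nonneg by blast

lemma munits_G:
  shows "munits (gen_monoid {aa p n | n. n \<ge> 1}) = {0}"
proof -
  have "u = 0" if "u \<in> gen_monoid {aa p n | n. n \<ge> 1}" "v \<in> gen_monoid {aa p n | n. n \<ge> 1}"
    "u + v = 0" for u v
    using G_nonneg[OF that(1)] G_nonneg[OF that(2)] that(3) by linarith
  then show ?thesis unfolding munits_def using gen_monoid.zero by fastforce
qed

lemma key_not_in: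
  assumes n: "n \<ge> 1" and zs: "set zs \<subseteq> {1..}" and nz: "n \<notin> set zs"
    and eq: "aa p n = sum_list (map (aa p) zs)"
  shows False
proof -
  define D where "D = (\<Prod>m\<in>set zs. 2 ^ m * p m)"
  have dv: "2 ^ m * p m dvd D" if "m \<in> set zs" for m
    unfolding D_def using that by (intro dvd_prodI) auto
  have pm: "p m > 0" if "m \<ge> 1" for m using pr[OF that] prime_gt_0_nat by blast
  have each: "aa p m * of_nat D = of_nat (D div (2 ^ m * p m))" if "m \<in> set zs" for m
  proof -
    have pos: "(2::nat) ^ m * p m > 0" using pm zs that by auto
    have "D = (D div (2 ^ m * p m)) * (2 ^ m * p m)" using dv[OF that] by simp
    then have "(of_nat D :: rat) = of_nat (D div (2 ^ m * p m)) * (2 ^ m * of_nat (p m))"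
      by (metis of_nat_mult of_nat_numeral of_nat_power)
    then show ?thesis unfolding aa_def using pos
      by (simp add: field_simps)
  qed
  have "sum_list (map (aa p) zs) * of_nat D = sum_list (map (\<lambda>m. aa p m * of_nat D) zs)"
    by (simp add: sum_list_mult_const)
  also have "\<dots> = sum_list (map (\<lambda>m. of_nat (D div (2 ^ m * p m))) zs)"
    using each by (intro arg_cong[where f=sum_list] map_cong) auto
  also have "\<dots> = of_nat (sum_list (map (\<lambda>m. D div (2 ^ m * p m)) zs))"
    by (simp only: sum_list_of_nat[symmetric] map_map o_def)
  finally have kk: "sum_list (map (aa p) zs) * of_nat D = of_nat (sum_list (map (\<lambda>m. D div (2 ^ m * p m)) zs))" .
  define k where "k = sum_list (map (\<lambda>m. D div (2 ^ m * p m)) zs)"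
  have k: "aa p n * of_nat D = of_nat k" unfolding k_def eq by (rule kk)
  have "(of_nat D :: rat) = of_nat k * (2 ^ n * of_nat (p n))"
    using k pm[OF n] unfolding aa_def by (simp add: field_simps)
  then have "(of_nat D :: rat) = of_nat (k * (2 ^ n * p n))" by simp
  then have "D = k * (2 ^ n * p n)" using of_nat_eq_iff by blast
  then have pnD: "p n dvd D" by simp
  have "prime (p n)" using pr n by blast
  have "\<exists>m\<in>set zs. p n dvd 2 ^ m * p m"
    using prime_dvd_prod_iff[OF finite_set[of zs] \<open>prime (p n)\<close>, of "\<lambda>m. 2 ^ m * p m"] pnD
    unfolding D_def by blast
  then obtain m where m: "m \<in> set zs" "p n dvd 2 ^ m * p m" by blast
  then have "p n dvd 2 ^ m \<or> p n dvd p m"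
    using \<open>prime (p n)\<close> prime_dvd_mult_iff by blast
  then show False
  proof
    assume "p n dvd 2 ^ m"
    then have "p n dvd 2" using \<open>prime (p n)\<close> prime_dvd_power by blast
    then have "p n \<le> 2" by (simp add: dvd_imp_le)
    moreover have "p n \<ge> 2" using \<open>prime (p n)\<close> prime_ge_2_nat by blast
    ultimately have "p n = 2" by simp
    then show False using pr[OF n] by simp
  next
    assume "p n dvd p m"
    moreover have "prime (p m)" using pr zs m by blast
    ultimately have "p n = p m" using \<open>prime (p n)\<close> primes_dvd_imp_eq by blast
    moreover have "m \<ge> 1" using zs m by auto
    ultimately have "n = m"
    proof -
      assume pe: "p n = p m" and m1: "m \<ge> 1"
      show "n = m"
      proof (rule ccontr)
        assume "n \<noteq> m"
        then have "n < m \<or> m < n" by linarith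
        then have "p n < p m \<or> p m < p n"
          using strict_mono_onD[OF mono] n m1 by auto
        then show False using pe by simp
      qed
    qed
    then show False using nz m by simp
  qed
qed

lemma key:
  assumes n: "n \<ge> 1" and zs: "set zs \<subseteq> {1..}"
    and eq: "aa p n = sum_list (map (aa p) zs)"
  shows "zs = [n]"
proof (cases "n \<in> set zs")
  case True
  then have "sum_list (map (aa p) zs) = aa p n + sum_list (map (aa p) (remove1 n zs))"
    by (metis sum_list_map_remove1)
  then have "sum_list (map (aa p) (remove1 n zs)) = 0" using eq by simp
  moreover have "set (remove1 n zs) \<subseteq> {1..}" using zs
    by (meson notin_set_remove1 subset_iff)
  ultimately have "remove1 n zs = []" using sum_pos by force
  then show ?thesis using True
    by (cases zs) (auto split: if_splits)
next
  case False
  then show ?thesis using key_not_in[OF assms(1,2) False eq] by blast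
qed


lemma atoms_G: "atoms (gen_monoid {aa p n | n. n \<ge> 1}) = {aa p n | n. n \<ge> 1}"
  (is "atoms ?G = ?S")
proof
  show "atoms ?G \<subseteq> ?S"
  proof
    fix x assume x: "x \<in> atoms ?G"
    then have xG: "x \<in> ?G" and xnu: "x \<notin> munits ?G"
      and spl: "\<forall>b\<in>?G. \<forall>c\<in>?G. x = b + c \<longrightarrow> b \<in> munits ?G \<or> c \<in> munits ?G"
      unfolding atoms_def by auto
    obtain xs where xs: "set xs \<subseteq> {1..}" "x = sum_list (map (aa p) xs)"
      using G_sub[OF xG] by blast
    have "x \<noteq> 0" using xnu munits_G by auto
    then obtain y ys where yys: "xs = y # ys" using xs by (cases xs) auto
    have "aa p y \<in> ?G" using G_sup[of "[y]" p] xs yys by simp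
    moreover have "sum_list (map (aa p) ys) \<in> ?G" using G_sup[of ys p] xs yys by simp
    ultimately have "aa p y = 0 \<or> sum_list (map (aa p) ys) = 0"
      using spl xs yys munits_G by auto
    moreover have "aa p y > 0" using aa_pos xs yys by auto
    ultimately have "x = aa p y" using xs yys by auto
    then show "x \<in> ?S" using xs yys by auto
  qed
next
  show "?S \<subseteq> atoms ?G"
  proof
    fix x assume "x \<in> ?S"
    then obtain n where n: "n \<ge> 1" "x = aa p n" by auto
    have xG: "x \<in> ?G" using G_sup[of "[n]" p] n by simp
    have "b = 0 \<or> c = 0" if bG: "b \<in> ?G" and cG: "c \<in> ?G" and xe: "x = b + c" for b c
    proof (rule ccontr)
      assume "\<not> (b = 0 \<or> c = 0)"
      obtain xs where xs: "set xs \<subseteq> {1..}" "b = sum_list (map (aa p) xs)"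
        using G_sub[OF bG] by blast
      obtain ys where ys: "set ys \<subseteq> {1..}" "c = sum_list (map (aa p) ys)"
        using G_sub[OF cG] by blast
      have "xs \<noteq> []" "ys \<noteq> []" using xs ys \<open>\<not> (b = 0 \<or> c = 0)\<close> by auto
      have "xs @ ys = [n]" using key[of n "xs @ ys"] n xs ys xe by simp
      then show False using \<open>xs \<noteq> []\<close> \<open>ys \<noteq> []\<close>
        by (metis append_eq_Cons_conv append_is_Nil_conv)
    qed
    moreover have "x \<noteq> 0" using aa_pos[OF n(1)] n(2) by simp
    ultimately show "x \<in> atoms ?G" unfolding atoms_def using xG munits_G by auto
  qed
qed

lemma half_rep: "n \<ge> 1 \<Longrightarrow> sum_list (replicate (2 ^ (n - 1) * p n) (aa p n)) = 1 / 2"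
proof -
  assume n: "n \<ge> 1"
  have "p n > 0" using pr[OF n] prime_gt_0_nat by blast
  obtain k where k: "n = Suc k" using n by (cases n) auto
  have pq: "(of_nat (p n) :: rat) \<noteq> 0" using \<open>p n > 0\<close> by simp
  have "sum_list (replicate (2 ^ (n - 1) * p n) (aa p n))
      = (2 ^ k * of_nat (p n)) * (1 / (2 * 2 ^ k * of_nat (p n)))"
    unfolding sum_list_replicate aa_def k by simp
  also have "\<dots> = 1 / 2" using pq by (simp add: field_simps)
  finally show ?thesis .
qed

lemma aa_inj: "inj_on (aa p) {1..}"
proof (rule inj_onI)
  fix m n assume m: "m \<in> {1..}" and n: "n \<in> {1..}" and e: "aa p m = aa p n"
  have pm: "p m > 0" "p n > 0" using pr m n prime_gt_0_nat by auto
  have "(2::rat) ^ m * of_nat (p m) = 2 ^ n * of_nat (p n)"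
    using e pm unfolding aa_def by (simp add: field_simps)
  then have eq: "(2::nat) ^ m * p m = 2 ^ n * p n"
    by (metis of_nat_eq_iff of_nat_mult of_nat_numeral of_nat_power)
  show "m = n"
  proof (rule ccontr)
    assume "m \<noteq> n"
    then consider "m < n" | "n < m" by linarith
    then show False
    proof cases
      case 1
      then have "p m < p n" using mono m n by (simp add: strict_mono_onD)
      moreover have "(2::nat) ^ m < 2 ^ n" using 1 by simp
      ultimately have "(2::nat) ^ m * p m < 2 ^ n * p n" by (simp add: mult_strict_mono)
      then show False using eq by simp
    next
      case 2
      then have "p n < p m" using mono m n by (simp add: strict_mono_onD)
      moreover have "(2::nat) ^ n < 2 ^ m" using 2 by simp
      ultimately have "(2::nat) ^ n * p n < 2 ^ m * p m" by (simp add: mult_strict_mono)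
      then show False using eq by simp
    qed
  qed
qed

lemma main_aa:
  "atoms (gen_monoid {aa p n | n. n \<ge> 1}) = {aa p n | n. n \<ge> 1}
   \<and> \<not> is_BFM (gen_monoid {aa p n | n. n \<ge> 1}) \<and> \<not> is_IDF (gen_monoid {aa p n | n. n \<ge> 1})"
  (is "?A \<and> ?B \<and> ?C")
proof (intro conjI)
  let ?G = "gen_monoid {aa p n | n. n \<ge> 1}"
  show ?A by (rule atoms_G)
  have h1: "sum_list (map (aa p) (replicate (2 ^ (1 - 1) * p 1) 1)) \<in> ?G"
    by (rule G_sup) auto
  have h2: "map (aa p) (replicate (2 ^ (1 - 1) * p 1) 1) = replicate (2 ^ (1 - 1) * p 1) (aa p 1)"
    by simp
  have halfG: "1/2 \<in> ?G" using h1 unfolding h2 half_rep[of 1, OF order.refl] .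
  have halfnu: "1/2 \<notin> munits ?G" using munits_G by simp
  have L: "2 ^ (n - 1) * p n \<in> lengths ?G (1/2)" if n: "n \<ge> 1" for n
    unfolding lengths_def using atoms_G half_rep[OF n] n
    by (intro CollectI exI[of _ "replicate (2 ^ (n - 1) * p n) (aa p n)"]) auto
  have "\<not> finite (lengths ?G (1/2))"
  proof
    assume "finite (lengths ?G (1/2))"
    then obtain B where B: "\<forall>x\<in>lengths ?G (1/2). x \<le> B"
      using finite_nat_set_iff_bounded_le by blast
    let ?n = "B + 2"
    have "2 ^ (?n - 1) * p ?n \<in> lengths ?G (1/2)" by (rule L) simp
    then have "2 ^ (?n - 1) * p ?n \<le> B" using B by blast
    moreover have "?n - 1 < 2 ^ (?n - 1)" by (rule less_exp)
    moreover have "p ?n \<ge> 1" using pr[of ?n] prime_gt_0_nat by (simp add: Suc_leI)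
    moreover have "(2::nat) ^ (?n - 1) \<le> 2 ^ (?n - 1) * p ?n"
      using \<open>p ?n \<ge> 1\<close> by simp
    ultimately have "2 ^ (?n - 1) \<le> B" by linarith
    then show False using \<open>?n - 1 < 2 ^ (?n - 1)\<close> by simp
  qed
  then show ?B unfolding is_BFM_def using halfG halfnu by blast
  have sub: "aa p ` {1..} \<subseteq> {a \<in> atoms ?G. mdvd ?G a (1/2)}"
  proof
    fix x assume "x \<in> aa p ` {1..}"
    then obtain n where n: "n \<ge> 1" "x = aa p n" by auto
    have k: "2 ^ (n - 1) * p n = Suc (2 ^ (n - 1) * p n - 1)"
      using pr[OF n(1)] prime_gt_0_nat by simp
    have "1/2 = sum_list (replicate (Suc (2 ^ (n - 1) * p n - 1)) (aa p n))"
      using half_rep[OF n(1)] k by simp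
    also have "\<dots> = aa p n + sum_list (replicate (2 ^ (n - 1) * p n - 1) (aa p n))"
      by simp
    finally have c1: "1/2 = aa p n + sum_list (replicate (2 ^ (n - 1) * p n - 1) (aa p n))" .
    have "sum_list (map (aa p) (replicate (2 ^ (n - 1) * p n - 1) n)) \<in> ?G"
      by (rule G_sup) (use n in auto)
    then have c2: "sum_list (replicate (2 ^ (n - 1) * p n - 1) (aa p n)) \<in> ?G"
      by (simp only: map_replicate)
    have "mdvd ?G x (1/2)" unfolding mdvd_def n(2) using c1 c2 by blast
    moreover have "x \<in> atoms ?G" unfolding atoms_G using n by blast
    ultimately show "x \<in> {a \<in> atoms ?G. mdvd ?G a (1/2)}" by blast
  qed
  have "infinite (aa p ` {1..})"
  proof
    assume "finite (aa p ` {1..})"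
    then have "finite ({1..} :: nat set)" by (rule finite_imageD) (rule aa_inj)
    then show False using infinite_Ici[of "1::nat"] by simp
  qed
  then have "infinite {a \<in> atoms ?G. mdvd ?G a (1/2)}"
    using sub by (meson finite_subset)
  then show ?C unfolding is_IDF_def using halfG by blast
qed

end

theorem mainTheorem8:
  fixes p :: "nat \<Rightarrow> nat"
  assumes "strict_mono_on {1..} p"
    and "\<And>n. n \<ge> 1 \<Longrightarrow> prime (p n) \<and> odd (p n)"
  defines "G \<equiv> gen_monoid {1 / (2 ^ n * of_nat (p n)) | n. n \<ge> 1}"
  shows "atoms G = {1 / (2 ^ n * of_nat (p n)) | n. n \<ge> 1}
         \<and> \<not> is_BFM G \<and> \<not> is_IDF G"
  using main_aa[OF assms(1,2)] unfolding G_def aa_def .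

end
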